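(* Let $\mu_1,\mu_2$ be partitions of the same length $r$ whose degree sequences (listed increasingly) agree in their first $r-1$ entries. If $R_{\mu_1}(x)=R_{\mu_2}(x)$, then either $\mu_1=\mu_2$, or one of $\mu_1,\mu_2$ is the partition $(0,\dots,0)$ of $0$ and the other is the partition $(1,0,\dots,0)$ of $1$.
   Context: $\mathrm{He}_k(x)$ denotes the monic probabilists' Hermite polynomial of degree $k$. A partition $\lambda=(\lambda_1\ge\dots\ge\lambda_r\ge0)$ may have zero parts; its degree sequence is $n_\lambda=(\lambda_r,\lambda_{r-1}+1,\dots,\lambda_1+r-1)$. $\mathrm{He}_\lambda=\mathrm{Wr}[\mathrm{He}_{n_1},\dots,\mathrm{He}_{n_r}]/\prod_{i<j}(n_j-n_i)$, monic of degree $|\lambda|$. Removing a $2$-hook means replacing an entry $a$ of $n_\lambda$ by $a-2\ge0$ with $a-2\notin n_\lambda$; removing $2$-hooks until impossible yields the $2$-core $\bar\lambda$, and $\mathrm{He}_\lambda(x)=x^{|\bar\lambda|}R_\lambda(x)$ with $R_\lambda\in\mathbb{Z}[x]$, $R_\lambda(0)\ne0$. *)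

theory Defs
  imports "HOL-Computational_Algebra.Polynomial" "HOL-Combinatorics.Permutations"
begin

text \<open>Monic probabilists' Hermite polynomials He_k (over the rationals).\<close>
fun hermite :: "nat \<Rightarrow> rat poly" where
  "hermite 0 = 1"
| "hermite (Suc 0) = [:0, 1:]"
| "hermite (Suc (Suc k)) = [:0, 1:] * hermite (Suc k) - smult (of_nat (Suc k)) (hermite k)"

text \<open>A partition of length r: list (lambda_1,...,lambda_r), weakly decreasing, zero parts allowed.\<close>
definition is_partition :: "nat list \<Rightarrow> bool" where
  "is_partition lam \<longleftrightarrow> sorted (rev lam)"

definition deg_seq :: "nat list \<Rightarrow> nat list" where
  "deg_seq lam = map (\<lambda>i. rev lam ! i + i) [0..<length lam]"

definition wronskian :: "nat \<Rightarrow> (nat \<Rightarrow> rat poly) \<Rightarrow> rat poly" where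
  "wronskian r f = (\<Sum>p | p permutes {0..<r}.
      of_int (sign p) * (\<Prod>i<r. (pderiv ^^ i) (f (p i))))"

definition hermite_part :: "nat list \<Rightarrow> rat poly" where
  "hermite_part lam =
     (let n = deg_seq lam; r = length lam in
      smult (1 / (\<Prod>j<r. \<Prod>i<j. (of_nat (n ! j) - of_nat (n ! i) :: rat)))
            (wronskian r (\<lambda>j. hermite (n ! j))))"

definition remove_2hook :: "nat set \<Rightarrow> nat set \<Rightarrow> bool" where
  "remove_2hook N M \<longleftrightarrow> (\<exists>a\<in>N. 2 \<le> a \<and> a - 2 \<notin> N \<and> M = insert (a - 2) (N - {a}))"

definition core_degs :: "nat list \<Rightarrow> nat set" where
  "core_degs lam = (SOME M. remove_2hook\<^sup>*\<^sup>* (set (deg_seq lam)) M \<and> (\<nexists>M'. remove_2hook M M'))"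

text \<open>|core|: size of the partition whose degree set (of r entries) is core_degs lam.\<close>
definition core_size :: "nat list \<Rightarrow> nat" where
  "core_size lam = \<Sum>(core_degs lam) - (length lam * (length lam - 1)) div 2"

definition R_part :: "nat list \<Rightarrow> rat poly" where
  "R_part lam = hermite_part lam div [:0, 1:] ^ core_size lam"

end

theory Submission imports Defs "Jordan_Normal_Form.Determinant"
begin

definition ff :: "rat \<Rightarrow> nat \<Rightarrow> rat" where "ff t i = (\<Prod>k<i. t - of_nat k)"

lemma ff_0[simp]: "ff t 0 = 1" by (simp add: ff_def)
lemma ff_Suc: "ff t (Suc i) = ff t i * (t - of_nat i)" by (simp add: ff_def)

lemma ff_zero: "n < i \<Longrightarrow> ff (of_nat n) i = 0"
proof -
  assume "n < i"
  then have "n \<in> {..<i}" by simp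
  then show ?thesis unfolding ff_def by (intro prod_zero) (auto intro!: bexI[of _ n])
qed

lemma ff_shift2: "ff t (i+2) = ff t 2 * ff (t - 2) i"
proof (induction i)
  case 0 then show ?case by (simp add: numeral_2_eq_2)
next
  case (Suc i)
  have "ff t (Suc i + 2) = ff t (i+2) * (t - of_nat (i+2))" by (metis add_Suc ff_Suc)
  also have "\<dots> = ff t 2 * ff (t - 2) i * (t - of_nat (i+2))" by (simp only: Suc.IH)
  also have "\<dots> = ff t 2 * (ff (t - 2) i * (t - 2 - of_nat i))" by (simp add: algebra_simps)
  also have "\<dots> = ff t 2 * ff (t - 2) (Suc i)" by (simp add: ff_Suc)
  finally show ?case .
qed

lemma ff_rec2: "ff t (i+2) = (t*(t-1) - of_nat i * (of_nat i - 1)) * ff t i - 2 * of_nat i * ff t (i+1)"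
  by (simp add: ff_Suc numeral_2_eq_2 algebra_simps)

lemma ff_rec1: "ff t (i+1) = (t - of_nat i) * ff t i"
  by (simp add: ff_Suc algebra_simps)

lemma hermite_coeffs:
  "(\<forall>k>n. coeff (hermite n) k = 0) \<and> coeff (hermite n) n = 1 \<and>
   (1 \<le> n \<longrightarrow> coeff (hermite n) (n-1) = 0) \<and>
   (2 \<le> n \<longrightarrow> coeff (hermite n) (n-2) = - ff (of_nat n) 2 / 2)"
proof (induction n rule: hermite.induct)
  case 1 then show ?case by (auto simp: coeff_1)
next
  case 2 then show ?case by (auto simp: coeff_pCons split: nat.split)
next
  case (3 k)
  have c: "coeff (hermite (Suc (Suc k))) j =
      (if j = 0 then 0 else coeff (hermite (Suc k)) (j-1)) - of_nat (Suc k) * coeff (hermite k) j" for j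
  proof -
    have "hermite (Suc (Suc k)) = pCons 0 (hermite (Suc k)) - Polynomial.smult (of_nat (Suc k)) (hermite k)"
      by simp
    then show ?thesis by (simp add: coeff_pCons split: nat.split)
  qed
  show ?case
  proof (intro conjI impI allI)
    fix j assume "Suc (Suc k) < j"
    then show "coeff (hermite (Suc (Suc k))) j = 0" using 3 by (simp add: c coeff_pCons split: nat.split)
  next
    show "coeff (hermite (Suc (Suc k))) (Suc (Suc k)) = 1" using 3 by (simp add: c coeff_pCons split: nat.split)
  next
    show "coeff (hermite (Suc (Suc k))) (Suc (Suc k) - 1) = 0" using 3 by (simp add: c coeff_pCons split: nat.split)
  next
    show "coeff (hermite (Suc (Suc k))) (Suc (Suc k) - 2) = - ff (of_nat (Suc (Suc k))) 2 / 2"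
    proof (cases k)
      case 0 then show ?thesis using 3 by (simp add: c coeff_pCons ff_def numeral_2_eq_2)
    next
      case (Suc k')
      then show ?thesis using 3 by (simp add: c coeff_pCons ff_def numeral_2_eq_2 field_simps)
    qed
  qed
qed

lemma coeff_pderiv_pow: "coeff ((pderiv ^^ i) p) k = ff (of_nat (k+i)) i * coeff p (k+i)"
proof (induction i arbitrary: k)
  case 0 then show ?case by simp
next
  case (Suc i)
  show ?case by (simp add: coeff_pderiv Suc ff_Suc algebra_simps)
qed

definition lowp :: "rat poly \<Rightarrow> nat \<Rightarrow> bool" where
  "lowp q e \<longleftrightarrow> q = 0 \<or> degree q + 3 \<le> e"

lemma lowp_0[simp]: "lowp 0 e" by (simp add: lowp_def)

lemma lowp_add: "lowp p e \<Longrightarrow> lowp q e \<Longrightarrow> lowp (p + q) e"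
  unfolding lowp_def using degree_add_le_max[of p q] by auto

lemma lowp_mult: "lowp q e \<Longrightarrow> degree p \<le> d \<Longrightarrow> lowp (p * q) (e + d)"
  unfolding lowp_def using degree_mult_le[of p q] by auto

lemma lowp_smult: "lowp q e \<Longrightarrow> lowp (Polynomial.smult c q) e"
  unfolding lowp_def by auto

lemma lowp_degree: "lowp q e \<Longrightarrow> degree q \<le> e"
  unfolding lowp_def by auto

lemma lowp_coeff: "lowp q e \<Longrightarrow> e < k + 3 \<Longrightarrow> coeff q k = 0"
  unfolding lowp_def by (auto intro: coeff_eq_0)

definition top :: "rat poly \<Rightarrow> nat \<Rightarrow> rat \<Rightarrow> rat \<Rightarrow> bool" where
  "top g e a b \<longleftrightarrow> (e < 2 \<longrightarrow> b = 0) \<and> lowp (g - monom a e - monom b (e - 2)) e"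

lemma top_0: "top 0 e 0 0" by (simp add: top_def)

lemma top_add: "top g e a b \<Longrightarrow> top h e a' b' \<Longrightarrow> top (g + h) e (a + a') (b + b')"
  unfolding top_def
proof (elim conjE, intro conjI)
  assume "lowp (g - monom a e - monom b (e - 2)) e" "lowp (h - monom a' e - monom b' (e - 2)) e"
  from lowp_add[OF this] show "lowp (g + h - monom (a + a') e - monom (b + b') (e - 2)) e"
    by (simp add: add_monom[symmetric] algebra_simps)
qed auto

lemma top_smult: "top g e a b \<Longrightarrow> top (Polynomial.smult c g) e (c * a) (c * b)"
  unfolding top_def
proof (elim conjE, intro conjI)
  assume "lowp (g - monom a e - monom b (e - 2)) e"
  from lowp_smult[OF this, of c] show "lowp (Polynomial.smult c g - monom (c * a) e - monom (c * b) (e - 2)) e"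
    by (simp add: smult_monom[symmetric] smult_diff_right)
qed auto

lemma top_sum: "finite S \<Longrightarrow> (\<And>x. x \<in> S \<Longrightarrow> top (g x) e (a x) (b x)) \<Longrightarrow>
   top (\<Sum>x\<in>S. g x) e (\<Sum>x\<in>S. a x) (\<Sum>x\<in>S. b x)"
  by (induction S rule: finite_induct) (auto simp: top_0 intro: top_add)

lemma monom_shift2: "monom ((a::rat) * b') (e + (e' - 2)) = monom (a * b') (e + e' - 2)"
  if "e' < 2 \<longrightarrow> b' = 0" using that by (cases "e' < 2") auto

lemma top_mult:
  assumes "top g e a b" "top h e' a' b'"
  shows "top (g * h) (e + e') (a * a') (a * b' + b * a')"
proof -
  obtain q where g: "g = monom a e + monom b (e - 2) + q" and q: "lowp q e" and b: "e < 2 \<longrightarrow> b = 0"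
    using assms(1) unfolding top_def by (intro that[of "g - monom a e - monom b (e - 2)"]) auto
  obtain q' where h: "h = monom a' e' + monom b' (e' - 2) + q'" and q': "lowp q' e'" and b': "e' < 2 \<longrightarrow> b' = 0"
    using assms(2) unfolding top_def by (intro that[of "h - monom a' e' - monom b' (e' - 2)"]) auto
  define R where "R = monom (b * b') (e - 2 + (e' - 2)) + monom a e * q' + monom b (e - 2) * q'
     + q * monom a' e' + q * monom b' (e' - 2) + q * q'"
  have gh: "g * h = monom (a * a') (e + e') + monom (a * b' + b * a') (e + e' - 2) + R"
  proof -
    have 1: "monom (a * b') (e + (e' - 2)) = monom (a * b') (e + e' - 2)"
      using monom_shift2[OF b'] by simp
    have 2: "monom (a' * b) (e' + (e - 2)) = monom (a' * b) (e + e' - 2)"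
      using monom_shift2[OF b, of a'] by (simp add: add.commute)
    show ?thesis unfolding g h R_def
      by (simp add: algebra_simps mult_monom 1 2 add_monom[symmetric])
  qed
  have R: "lowp R (e + e')"
  proof -
    have "lowp (monom (b * b') (e - 2 + (e' - 2))) (e + e')"
    proof (cases "b * b' = 0")
      case False
      then have "e \<ge> 2" "e' \<ge> 2" using b b' by auto
      then show ?thesis unfolding lowp_def using degree_monom_le[of "b*b'" "e - 2 + (e' - 2)"] by linarith
    qed auto
    moreover have "lowp (monom a e * q') (e' + e)" by (rule lowp_mult[OF q']) (simp add: degree_monom_le)
    moreover have "lowp (monom b (e - 2) * q') (e' + e)" by (rule lowp_mult[OF q']) (meson degree_monom_le diff_le_self le_trans)
    moreover have "lowp (monom a' e' * q) (e + e')" by (rule lowp_mult[OF q]) (simp add: degree_monom_le)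
    moreover have "lowp (monom b' (e' - 2) * q) (e + e')" by (rule lowp_mult[OF q]) (meson degree_monom_le diff_le_self le_trans)
    moreover have "lowp (q' * q) (e + e')" by (rule lowp_mult[OF q lowp_degree[OF q']])
    ultimately show ?thesis unfolding R_def by (auto simp: add.commute mult.commute intro!: lowp_add)
  qed
  show ?thesis unfolding top_def using gh R b b' by auto
qed

lemma top_prod: "finite S \<Longrightarrow> (\<And>x. x \<in> S \<Longrightarrow> top (g x) (e x) (a x) (b x)) \<Longrightarrow>
   top (\<Prod>x\<in>S. g x) (\<Sum>x\<in>S. e x) (\<Prod>x\<in>S. a x) (\<Sum>x\<in>S. b x * (\<Prod>y\<in>S-{x}. a y))"
proof (induction S rule: finite_induct)
  case empty then show ?case by (simp add: top_def)
next
  case (insert x F)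
  have t: "top (g x * (\<Prod>x\<in>F. g x)) (e x + (\<Sum>x\<in>F. e x)) (a x * (\<Prod>x\<in>F. a x))
     (a x * (\<Sum>y\<in>F. b y * (\<Prod>z\<in>F-{y}. a z)) + b x * (\<Prod>x\<in>F. a x))"
    by (rule top_mult) (use insert in auto)
  have "(\<Sum>y\<in>insert x F. b y * (\<Prod>z\<in>insert x F-{y}. a z)) =
     b x * (\<Prod>x\<in>F. a x) + (\<Sum>y\<in>F. b y * (\<Prod>z\<in>insert x F-{y}. a z))"
    using insert by (simp add: sum.insert)
  also have "(\<Sum>y\<in>F. b y * (\<Prod>z\<in>insert x F-{y}. a z)) = (\<Sum>y\<in>F. b y * (a x * (\<Prod>z\<in>F-{y}. a z)))"
  proof (rule sum.cong)
    fix y assume "y \<in> F"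
    then have "insert x F - {y} = insert x (F - {y})" using insert by auto
    then show "b y * (\<Prod>z\<in>insert x F-{y}. a z) = b y * (a x * (\<Prod>z\<in>F-{y}. a z))"
      using insert by simp
  qed simp
  finally show ?case using t insert by (simp add: sum_distrib_left algebra_simps)
qed

lemma top_coeffs:
  assumes "top g e a b"
  shows "\<forall>k>e. coeff g k = 0" "coeff g e = a" "2 \<le> e \<Longrightarrow> coeff g (e - 2) = b"
proof -
  obtain q where g: "g = monom a e + monom b (e - 2) + q" and q: "lowp q e" and b: "e < 2 \<longrightarrow> b = 0"
    using assms unfolding top_def by (intro that[of "g - monom a e - monom b (e - 2)"]) auto
  show "\<forall>k>e. coeff g k = 0" using lowp_coeff[OF q] by (auto simp: g coeff_monom)
  show "coeff g e = a" using lowp_coeff[OF q, of e] b by (cases "e < 2") (auto simp: g coeff_monom)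
  show "coeff g (e - 2) = b" if "2 \<le> e" using lowp_coeff[OF q, of "e-2"] that by (auto simp: g coeff_monom)
qed

lemma top_of_coeffs:
  assumes "e < 2 \<longrightarrow> b = 0" "\<forall>k>e. coeff g k = 0" "coeff g e = a" "1 \<le> e \<longrightarrow> coeff g (e - 1) = 0"
    "2 \<le> e \<longrightarrow> coeff g (e - 2) = b"
  shows "top g e a b"
proof -
  define q where "q = g - monom a e - monom b (e - 2)"
  have c: "coeff q k = 0" if "e < k + 3" for k
  proof -
    have "k > e \<or> k = e \<or> k + 1 = e \<or> k + 2 = e" using that by linarith
    then show ?thesis using assms unfolding q_def
      by (elim disjE) (auto simp: coeff_monom)
  qed
  have "lowp q e"
  proof (cases "q = 0")
    case False
    then have "coeff q (degree q) \<noteq> 0" by simp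
    then have "\<not> e < degree q + 3" using c by blast
    then show ?thesis unfolding lowp_def by simp
  qed simp
  then show ?thesis unfolding top_def q_def using assms by simp
qed

lemma top_factor:
  "top ((pderiv ^^ i) (hermite m)) (m - i) (ff (of_nat m) i) (- ff (of_nat m) (i+2) / 2)"
proof (cases "m < i")
  case True
  have "(pderiv ^^ i) (hermite m) = 0"
    by (rule poly_eqI) (use True hermite_coeffs[of m] in \<open>auto simp: coeff_pderiv_pow\<close>)
  moreover have "ff (of_nat m) i = 0" "ff (of_nat m) (i+2) = 0" using True by (auto intro: ff_zero)
  ultimately show ?thesis using top_0 by simp
next
  case False
  note H = hermite_coeffs[of m]
  show ?thesis
  proof (rule top_of_coeffs)
    show "m - i < 2 \<longrightarrow> - ff (of_nat m) (i + 2) / 2 = 0" by (auto intro: ff_zero)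
    show "\<forall>k>m - i. coeff ((pderiv ^^ i) (hermite m)) k = 0"
      using False H by (auto simp: coeff_pderiv_pow)
    show "coeff ((pderiv ^^ i) (hermite m)) (m - i) = ff (of_nat m) i"
      using False H by (auto simp: coeff_pderiv_pow)
    show "1 \<le> m - i \<longrightarrow> coeff ((pderiv ^^ i) (hermite m)) (m - i - 1) = 0"
    proof
      assume "1 \<le> m - i"
      then have "m - i - 1 + i = m - 1" "1 \<le> m" by auto
      then show "coeff ((pderiv ^^ i) (hermite m)) (m - i - 1) = 0"
        using H by (simp add: coeff_pderiv_pow)
    qed
    show "2 \<le> m - i \<longrightarrow> coeff ((pderiv ^^ i) (hermite m)) (m - i - 2) = - ff (of_nat m) (i + 2) / 2"
    proof
      assume a: "2 \<le> m - i"
      then have e: "m - i - 2 + i = m - 2" "2 \<le> m" by auto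
      then have "of_nat (m - 2) = (of_nat m - 2 :: rat)" by (simp add: of_nat_diff)
      then show "coeff ((pderiv ^^ i) (hermite m)) (m - i - 2) = - ff (of_nat m) (i + 2) / 2"
        using H e ff_shift2[of "of_nat m" i] by (simp add: coeff_pderiv_pow mult.commute)
    qed
  qed
qed

definition Dn :: "nat \<Rightarrow> (nat \<Rightarrow> nat) \<Rightarrow> rat" where
  "Dn r n = (\<Sum>p | p permutes {0..<r}. of_int (sign p) * (\<Prod>i<r. ff (of_nat (n (p i))) i))"

definition Bn :: "nat \<Rightarrow> (nat \<Rightarrow> nat) \<Rightarrow> rat" where
  "Bn r n = (\<Sum>p | p permutes {0..<r}. of_int (sign p) *
      (\<Sum>i<r. (- ff (of_nat (n (p i))) (i+2) / 2) * (\<Prod>l\<in>{..<r}-{i}. ff (of_nat (n (p l))) l)))"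

lemma sum_perm: "p permutes {0..<(r::nat)} \<Longrightarrow> (\<Sum>i<r. f (p i)) = (\<Sum>i<r. f i)"
proof -
  assume p: "p permutes {0..<r}"
  have e: "{0..<r} = {..<r}" by auto
  have "sum f {..<r} = sum (f \<circ> p) {..<r}" by (rule sum.permute) (use p e in simp)
  then show ?thesis by (simp add: comp_def)
qed

lemma top_W:
  "top (wronskian r (\<lambda>j. hermite (n j))) ((\<Sum>i<r. n i) - (\<Sum>i<r. i)) (Dn r n) (Bn r n)"
proof -
  let ?N = "(\<Sum>i<r. n i) - (\<Sum>i<r. i)"
  have t: "top (\<Prod>i<r. (pderiv ^^ i) (hermite (n (p i)))) ?N
     (\<Prod>i<r. ff (of_nat (n (p i))) i)
     (\<Sum>i<r. (- ff (of_nat (n (p i))) (i+2) / 2) * (\<Prod>l\<in>{..<r}-{i}. ff (of_nat (n (p l))) l))"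
    if p: "p permutes {0..<r}" for p
  proof (cases "\<forall>i<r. i \<le> n (p i)")
    case True
    have "(\<Sum>i<r. n (p i) - i) = ?N"
    proof -
      have "(\<Sum>i<r. n (p i) - i) + (\<Sum>i<r. i) = (\<Sum>i<r. n (p i))"
        by (subst sum.distrib[symmetric]) (rule sum.cong, use True in auto)
      then show ?thesis using sum_perm[OF p, of n] by simp
    qed
    moreover have "top (\<Prod>i<r. (pderiv ^^ i) (hermite (n (p i)))) (\<Sum>i<r. n (p i) - i)
     (\<Prod>i<r. ff (of_nat (n (p i))) i)
     (\<Sum>i<r. (- ff (of_nat (n (p i))) (i+2) / 2) * (\<Prod>l\<in>{..<r}-{i}. ff (of_nat (n (p l))) l))"
      by (rule top_prod, simp, rule top_factor)
    ultimately show ?thesis by simp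
  next
    case False
    then obtain i0 where i0: "i0 < r" "n (p i0) < i0" by auto
    have z1: "ff (of_nat (n (p i0))) i0 = 0" "ff (of_nat (n (p i0))) (i0+2) = 0" using i0 by (auto intro: ff_zero)
    have "(pderiv ^^ i0) (hermite (n (p i0))) = 0"
      by (rule poly_eqI) (use i0 hermite_coeffs[of "n (p i0)"] in \<open>auto simp: coeff_pderiv_pow\<close>)
    then have "(\<Prod>i<r. (pderiv ^^ i) (hermite (n (p i)))) = 0"
      using i0 by (intro prod_zero) auto
    moreover have "(\<Prod>i<r. ff (of_nat (n (p i))) i) = 0"
      using i0 z1 by (intro prod_zero) auto
    moreover have "(\<Sum>i<r. (- ff (of_nat (n (p i))) (i+2) / 2) * (\<Prod>l\<in>{..<r}-{i}. ff (of_nat (n (p l))) l)) = 0"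
    proof (rule sum.neutral, intro ballI)
      fix i assume "i \<in> {..<r}"
      show "(- ff (of_nat (n (p i))) (i+2) / 2) * (\<Prod>l\<in>{..<r}-{i}. ff (of_nat (n (p l))) l) = 0"
      proof (cases "i = i0")
        case True then show ?thesis using z1 by simp
      next
        case False
        then have "(\<Prod>l\<in>{..<r}-{i}. ff (of_nat (n (p l))) l) = 0"
          using i0 z1 by (intro prod_zero) auto
        then show ?thesis by simp
      qed
    qed
    ultimately show ?thesis by (simp only: top_0)
  qed
  have "wronskian r (\<lambda>j. hermite (n j)) = (\<Sum>p | p permutes {0..<r}.
      Polynomial.smult (of_int (sign p)) (\<Prod>i<r. (pderiv ^^ i) (hermite (n (p i)))))"
    unfolding wronskian_def by (simp add: of_int_poly)
  moreover have "top \<dots> ?N (Dn r n) (Bn r n)"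
    unfolding Dn_def Bn_def
    by (rule top_sum) (simp add: finite_permutations, rule top_smult, rule t, simp)
  ultimately show ?thesis by simp
qed

definition Lrep :: "nat \<Rightarrow> (nat \<Rightarrow> nat) \<Rightarrow> nat \<Rightarrow> (nat \<Rightarrow> rat) \<Rightarrow> rat" where
  "Lrep r n i c = (\<Sum>p | p permutes {0..<r}. of_int (sign p) * (c (p i) * (\<Prod>l\<in>{..<r}-{i}. ff (of_nat (n (p l))) l)))"

lemma Lrep_dup: assumes "Suc i < r" shows "Lrep r n i (\<lambda>j. ff (of_nat (n j)) (Suc i)) = 0"
proof -
  define M where "M = mat r r (\<lambda>(l,j). if l = i then ff (of_nat (n j)) (Suc i) else ff (of_nat (n j)) l)"
  have M: "M \<in> carrier_mat r r" unfolding M_def by simp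
  have "det M = 0"
  proof (rule det_identical_rows[OF M, of i "Suc i"])
    show "row M i = row M (Suc i)" unfolding M_def using assms
      by (intro eq_vecI) auto
  qed (use assms in auto)
  moreover have "det M = Lrep r n i (\<lambda>j. ff (of_nat (n j)) (Suc i))"
    unfolding det_def'[OF M] Lrep_def
  proof (rule sum.cong[OF refl])
    fix p assume "p \<in> {p. p permutes {0..<r}}"
    then have p: "p permutes {0..<r}" by simp
    have pl: "p l < r" if "l < r" for l using permutes_in_image[OF p] that by auto
    have "(\<Prod>l = 0..<r. M $$ (l, p l)) = M $$ (i, p i) * (\<Prod>l\<in>{0..<r}-{i}. M $$ (l, p l))"
      using assms by (subst prod.remove[of _ i]) auto
    also have "\<dots> = ff (of_nat (n (p i))) (Suc i) * (\<Prod>l\<in>{..<r}-{i}. ff (of_nat (n (p l))) l)"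
    proof -
      have "{0..<r}-{i} = {..<r}-{i}" by auto
      moreover have "M $$ (l, p l) = ff (of_nat (n (p l))) l" if "l \<in> {..<r}-{i}" for l
        unfolding M_def using that pl by auto
      moreover have "M $$ (i, p i) = ff (of_nat (n (p i))) (Suc i)" unfolding M_def using assms pl by auto
      ultimately show ?thesis by (metis (no_types, lifting) prod.cong)
    qed
    finally show "of_int (sign p) * (\<Prod>l = 0..<r. M $$ (l, p l)) =
      of_int (sign p) * (ff (of_nat (n (p i))) (Suc i) * (\<Prod>l\<in>{..<r}-{i}. ff (of_nat (n (p l))) l))" by simp
  qed
  ultimately show ?thesis by simp
qed

lemma prod_split_i: "i < (r::nat) \<Longrightarrow> (\<Prod>l<r. f l) = f i * (\<Prod>l\<in>{..<r}-{i}. f l)"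
  by (subst prod.remove[of _ i]) auto

lemma Lrep_sum:
  "(\<Sum>i<r. Lrep r n i (\<lambda>j. ff (of_nat (n j)) (Suc i))) =
     ((\<Sum>j<r. of_nat (n j)) - (\<Sum>i<r. of_nat i)) * Dn r n"
proof -
  have "(\<Sum>i<r. Lrep r n i (\<lambda>j. ff (of_nat (n j)) (Suc i))) =
     (\<Sum>p | p permutes {0..<r}. of_int (sign p) * (\<Sum>i<r. ff (of_nat (n (p i))) (Suc i) * (\<Prod>l\<in>{..<r}-{i}. ff (of_nat (n (p l))) l)))"
    unfolding Lrep_def by (simp add: sum_distrib_left sum.swap[of _ "{..<r}"])
  also have "\<dots> = (\<Sum>p | p permutes {0..<r}. of_int (sign p) * (((\<Sum>j<r. of_nat (n j)) - (\<Sum>i<r. of_nat i)) * (\<Prod>l<r. ff (of_nat (n (p l))) l)))"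
  proof (rule sum.cong[OF refl])
    fix p assume "p \<in> {p. p permutes {0..<r}}"
    then have p: "p permutes {0..<r}" by simp
    have "(\<Sum>i<r. ff (of_nat (n (p i))) (Suc i) * (\<Prod>l\<in>{..<r}-{i}. ff (of_nat (n (p l))) l)) =
          (\<Sum>i<r. (of_nat (n (p i)) - of_nat i) * (\<Prod>l<r. ff (of_nat (n (p l))) l))"
      by (rule sum.cong[OF refl]) (simp add: prod_split_i[of _ r] ff_Suc)
    also have "\<dots> = ((\<Sum>i<r. of_nat (n (p i))) - (\<Sum>i<r. of_nat i)) * (\<Prod>l<r. ff (of_nat (n (p l))) l)"
      by (simp add: left_diff_distrib sum_distrib_right sum_subtractf)
    also have "(\<Sum>i<r. (of_nat (n (p i)) :: rat)) = (\<Sum>j<r. of_nat (n j))"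
      by (rule sum_perm[OF p, of "\<lambda>j. of_nat (n j)"])
    finally show "of_int (sign p) * (\<Sum>i<r. ff (of_nat (n (p i))) (Suc i) * (\<Prod>l\<in>{..<r}-{i}. ff (of_nat (n (p l))) l)) =
       of_int (sign p) * (((\<Sum>j<r. of_nat (n j)) - (\<Sum>i<r. of_nat i)) * (\<Prod>l<r. ff (of_nat (n (p l))) l))" by simp
  qed
  also have "\<dots> = ((\<Sum>j<r. of_nat (n j)) - (\<Sum>i<r. of_nat i)) * Dn r n"
    unfolding Dn_def by (simp add: sum_distrib_left algebra_simps)
  finally show ?thesis .
qed

lemma Lrep_weighted:
  "(\<Sum>i<r. of_nat i * Lrep r n i (\<lambda>j. ff (of_nat (n j)) (Suc i))) =
     of_nat (r - 1) * ((\<Sum>j<r. of_nat (n j)) - (\<Sum>i<r. of_nat i)) * Dn r n"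
proof -
  have "(\<Sum>i<r. of_nat i * Lrep r n i (\<lambda>j. ff (of_nat (n j)) (Suc i))) =
        (\<Sum>i<r. of_nat (r - 1) * Lrep r n i (\<lambda>j. ff (of_nat (n j)) (Suc i)))"
  proof (rule sum.cong[OF refl])
    fix i assume "i \<in> {..<r}"
    then show "of_nat i * Lrep r n i (\<lambda>j. ff (of_nat (n j)) (Suc i)) =
        of_nat (r - 1) * Lrep r n i (\<lambda>j. ff (of_nat (n j)) (Suc i))"
      using Lrep_dup[of i r n] by (cases "Suc i < r") auto
  qed
  also have "\<dots> = of_nat (r - 1) * ((\<Sum>j<r. of_nat (n j)) - (\<Sum>i<r. of_nat i)) * Dn r n"
    by (simp only: sum_distrib_left[symmetric] Lrep_sum mult.assoc)
  finally show ?thesis .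
qed

lemma Bn_formula:
  "Bn r n = - (1/2) * ((\<Sum>j<r. of_nat (n j) * (of_nat (n j) - 1)) - (\<Sum>i<r. of_nat i * (of_nat i - 1))
     - 2 * of_nat (r - 1) * ((\<Sum>j<r. of_nat (n j)) - (\<Sum>i<r. of_nat i))) * Dn r n"
proof -
  let ?P = "\<lambda>p. (\<Prod>l<r. ff (of_nat (n (p l))) l)"
  have "-2 * Bn r n = (\<Sum>p | p permutes {0..<r}. of_int (sign p) *
      (\<Sum>i<r. ff (of_nat (n (p i))) (i+2) * (\<Prod>l\<in>{..<r}-{i}. ff (of_nat (n (p l))) l)))"
    unfolding Bn_def by (simp add: sum_distrib_left sum_negf)
  also have "\<dots> = (\<Sum>p | p permutes {0..<r}. of_int (sign p) *
      (((\<Sum>j<r. of_nat (n j) * (of_nat (n j) - 1)) - (\<Sum>i<r. of_nat i * (of_nat i - 1))) * ?P p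
       - 2 * (\<Sum>i<r. of_nat i * (ff (of_nat (n (p i))) (Suc i) * (\<Prod>l\<in>{..<r}-{i}. ff (of_nat (n (p l))) l)))))"
  proof (rule sum.cong[OF refl])
    fix p assume "p \<in> {p. p permutes {0..<r}}"
    then have p: "p permutes {0..<r}" by simp
    have "(\<Sum>i<r. ff (of_nat (n (p i))) (i+2) * (\<Prod>l\<in>{..<r}-{i}. ff (of_nat (n (p l))) l)) =
       (\<Sum>i<r. (of_nat (n (p i)) * (of_nat (n (p i)) - 1) - of_nat i * (of_nat i - 1)) * ?P p
         - 2 * (of_nat i * (ff (of_nat (n (p i))) (Suc i) * (\<Prod>l\<in>{..<r}-{i}. ff (of_nat (n (p l))) l))))"
    proof (rule sum.cong[OF refl])
      fix i assume i: "i \<in> {..<r}"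
      show "ff (of_nat (n (p i))) (i+2) * (\<Prod>l\<in>{..<r}-{i}. ff (of_nat (n (p l))) l) =
         (of_nat (n (p i)) * (of_nat (n (p i)) - 1) - of_nat i * (of_nat i - 1)) * ?P p
         - 2 * (of_nat i * (ff (of_nat (n (p i))) (Suc i) * (\<Prod>l\<in>{..<r}-{i}. ff (of_nat (n (p l))) l)))"
        using i by (simp only: ff_rec2 prod_split_i[of i r] lessThan_iff Suc_eq_plus1) (simp add: algebra_simps)
    qed
    also have "\<dots> = ((\<Sum>i<r. of_nat (n (p i)) * (of_nat (n (p i)) - 1)) - (\<Sum>i<r. of_nat i * (of_nat i - 1))) * ?P p
        - 2 * (\<Sum>i<r. of_nat i * (ff (of_nat (n (p i))) (Suc i) * (\<Prod>l\<in>{..<r}-{i}. ff (of_nat (n (p l))) l)))"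
      by (simp add: left_diff_distrib right_diff_distrib sum_subtractf sum_distrib_right sum_distrib_left)
    also have "(\<Sum>i<r. of_nat (n (p i)) * (of_nat (n (p i)) - 1)) = (\<Sum>j<r. of_nat (n j) * (of_nat (n j) - (1::rat)))"
      by (rule sum_perm[OF p, of "\<lambda>j. of_nat (n j) * (of_nat (n j) - 1)"])
    finally show "of_int (sign p) * (\<Sum>i<r. ff (of_nat (n (p i))) (i+2) * (\<Prod>l\<in>{..<r}-{i}. ff (of_nat (n (p l))) l)) =
      of_int (sign p) * (((\<Sum>j<r. of_nat (n j) * (of_nat (n j) - 1)) - (\<Sum>i<r. of_nat i * (of_nat i - 1))) * ?P p
       - 2 * (\<Sum>i<r. of_nat i * (ff (of_nat (n (p i))) (Suc i) * (\<Prod>l\<in>{..<r}-{i}. ff (of_nat (n (p l))) l))))" by simp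
  qed
  also have "\<dots> = ((\<Sum>j<r. of_nat (n j) * (of_nat (n j) - 1)) - (\<Sum>i<r. of_nat i * (of_nat i - 1))) * Dn r n
      - 2 * (\<Sum>i<r. of_nat i * Lrep r n i (\<lambda>j. ff (of_nat (n j)) (Suc i)))"
  proof -
    let ?C = "((\<Sum>j<r. of_nat (n j) * (of_nat (n j) - 1)) - (\<Sum>i<r. of_nat i * (of_nat i - (1::rat))))"
    let ?X = "\<lambda>p i. ff (of_nat (n (p i))) (Suc i) * (\<Prod>l\<in>{..<r}-{i}. ff (of_nat (n (p l))) l)"
    have a: "(\<Sum>p | p permutes {0..<r}. of_int (sign p) * (?C * ?P p - 2 * (\<Sum>i<r. of_nat i * ?X p i))) =
       ?C * (\<Sum>p | p permutes {0..<r}. of_int (sign p) * ?P p) - 2 * (\<Sum>p | p permutes {0..<r}. (\<Sum>i<r. of_nat i * (of_int (sign p) * ?X p i)))"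
    proof -
      have a1: "of_int (sign p) * (?C * ?P p - 2 * (\<Sum>i<r. of_nat i * ?X p i)) =
         ?C * (of_int (sign p) * ?P p) - 2 * (\<Sum>i<r. of_nat i * (of_int (sign p) * ?X p i))" for p
        by (simp add: sum_distrib_left right_diff_distrib mult.left_commute)
      show ?thesis unfolding a1 by (simp only: sum_subtractf sum_distrib_left)
    qed
    have b: "(\<Sum>p | p permutes {0..<r}. (\<Sum>i<r. of_nat i * (of_int (sign p) * ?X p i))) =
       (\<Sum>i<r. of_nat i * Lrep r n i (\<lambda>j. ff (of_nat (n j)) (Suc i)))"
      unfolding Lrep_def by (subst sum.swap) (simp add: sum_distrib_left)
    show ?thesis unfolding a b Dn_def by simp
  qed
  also have "\<dots> = ((\<Sum>j<r. of_nat (n j) * (of_nat (n j) - 1)) - (\<Sum>i<r. of_nat i * (of_nat i - 1))) * Dn r n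
      - 2 * (of_nat (r - 1) * ((\<Sum>j<r. of_nat (n j)) - (\<Sum>i<r. of_nat i)) * Dn r n)"
    by (simp only: Lrep_weighted)
  finally show ?thesis by (simp add: algebra_simps)
qed

definition ffp :: "nat \<Rightarrow> rat poly" where "ffp i = (\<Prod>k<i. [:- of_nat k, 1:])"

lemma poly_ffp: "poly (ffp i) t = ff t i"
  unfolding ffp_def ff_def by (simp add: poly_prod)

lemma ffp_deg: "degree (ffp i) = i \<and> coeff (ffp i) i = 1"
proof (induction i)
  case 0 then show ?case by (simp add: ffp_def)
next
  case (Suc i)
  have e: "ffp (Suc i) = ffp i * [:- of_nat i, 1:]" by (simp add: ffp_def)
  have nz: "ffp i \<noteq> 0" using Suc by auto
  have "degree (ffp i * [:- of_nat i, 1:]) = degree (ffp i) + degree [:- of_nat i, 1::rat:]"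
    by (rule degree_mult_eq) (use nz in auto)
  then have "degree (ffp (Suc i)) = Suc i" unfolding e using Suc by simp
  moreover have "lead_coeff (ffp i * [:- of_nat i, 1::rat:]) = lead_coeff (ffp i) * lead_coeff [:- of_nat i, 1::rat:]"
    by (rule lead_coeff_mult)
  then have "lead_coeff (ffp (Suc i)) = 1" unfolding e using Suc by simp
  ultimately show ?case by simp
qed

lemma Dn_det: "Dn r n = det (mat r r (\<lambda>(i,j). ff (of_nat (n j)) i))"
  unfolding Dn_def det_def'[OF mat_carrier]
proof (rule sum.cong[OF refl])
  fix p assume "p \<in> {p. p permutes {0..<r}}"
  then have p: "p permutes {0..<r}" by simp
  have pl: "p l < r" if "l < r" for l using permutes_in_image[OF p] that by auto
  have "(\<Prod>i = 0..<r. mat r r (\<lambda>(i,j). ff (of_nat (n j)) i) $$ (i, p i)) = (\<Prod>i<r. ff (of_nat (n (p i))) i)"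
    by (simp add: lessThan_atLeast0 pl)
  then show "of_int (sign p) * (\<Prod>i<r. ff (of_nat (n (p i))) i) =
     of_int (sign p) * (\<Prod>i = 0..<r. mat r r (\<lambda>(i,j). ff (of_nat (n j)) i) $$ (i, p i))" by simp
qed

lemma Dn_nonzero: assumes inj: "inj_on n {..<r}" shows "Dn r n \<noteq> 0"
proof
  assume D0: "Dn r n = 0"
  define M where "M = mat r r (\<lambda>(i,j). ff (of_nat (n j)) i)"
  have M: "M \<in> carrier_mat r r" unfolding M_def by simp
  have MT: "transpose_mat M \<in> carrier_mat r r" using M by simp
  have "det (transpose_mat M) = 0" using D0 det_transpose[OF M] unfolding M_def Dn_det by simp
  then obtain v where v: "v \<in> carrier_vec r" "v \<noteq> 0\<^sub>v r" "transpose_mat M *\<^sub>v v = 0\<^sub>v r"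
    using det_0_iff_vec_prod_zero_field[OF MT] by blast
  define P where "P = (\<Sum>i<r. Polynomial.smult (v $ i) (ffp i))"
  have root: "poly P (of_nat (n j)) = 0" if j: "j < r" for j
  proof -
    have "(transpose_mat M *\<^sub>v v) $ j = 0" using v(3) j by simp
    moreover have "(transpose_mat M *\<^sub>v v) $ j = (\<Sum>i<r. ff (of_nat (n j)) i * v $ i)"
      using j v(1) M unfolding M_def
      by (simp add: scalar_prod_def lessThan_atLeast0 mult.commute)
    ultimately show ?thesis unfolding P_def by (simp add: poly_sum poly_ffp mult.commute)
  qed
  obtain i1 where i1: "i1 < r" "v $ i1 \<noteq> 0"
    using v(1,2) by (metis carrier_vecD eq_vecI index_zero_vec(1) index_zero_vec(2))
  define I where "I = {i. i < r \<and> v $ i \<noteq> 0}"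
  have fI: "finite I" "I \<noteq> {}" using i1 unfolding I_def by auto
  define i0 where "i0 = Max I"
  have i0: "i0 < r" "v $ i0 \<noteq> 0" using Max_in[OF fI] unfolding i0_def I_def by auto
  have above: "v $ i = 0" if "i < r" "i0 < i" for i
  proof (rule ccontr)
    assume "v $ i \<noteq> 0"
    then have "i \<in> I" using that unfolding I_def by auto
    then have "i \<le> i0" unfolding i0_def using fI(1) by simp
    then show False using that by simp
  qed
  have "coeff P i0 = (\<Sum>i<r. v $ i * coeff (ffp i) i0)" unfolding P_def by (simp add: coeff_sum)
  also have "\<dots> = v $ i0 * coeff (ffp i0) i0 + (\<Sum>i\<in>{..<r}-{i0}. v $ i * coeff (ffp i) i0)"
    using i0 by (subst sum.remove[of _ i0]) auto
  also have "(\<Sum>i\<in>{..<r}-{i0}. v $ i * coeff (ffp i) i0) = 0"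
  proof (rule sum.neutral, intro ballI)
    fix i assume i: "i \<in> {..<r}-{i0}"
    show "v $ i * coeff (ffp i) i0 = 0"
    proof (cases "i < i0")
      case True
      then have "coeff (ffp i) i0 = 0" using ffp_deg[of i] by (intro coeff_eq_0) auto
      then show ?thesis by simp
    next
      case False
      then show ?thesis using above i by auto
    qed
  qed
  finally have "coeff P i0 = v $ i0" using ffp_deg[of i0] by simp
  then have Pnz: "P \<noteq> 0" using i0 by auto
  have degP: "degree P \<le> r - 1"
    unfolding P_def
  proof (rule degree_sum_le)
    fix i assume "i \<in> {..<r}"
    then show "degree (Polynomial.smult (v $ i) (ffp i)) \<le> r - 1"
      using ffp_deg[of i] degree_smult_le[of "v $ i" "ffp i"] by auto
  qed simp
  have "(\<lambda>j. (of_nat (n j) :: rat)) ` {..<r} \<subseteq> {x. poly P x = 0}" using root by auto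
  moreover have "card ((\<lambda>j. (of_nat (n j) :: rat)) ` {..<r}) = r"
  proof -
    have "inj_on (\<lambda>j. (of_nat (n j) :: rat)) {..<r}" using inj unfolding inj_on_def by auto
    then show ?thesis by (simp add: card_image)
  qed
  ultimately have "r \<le> card {x. poly P x = 0}"
    by (metis card_mono poly_roots_finite[OF Pnz])
  also have "\<dots> \<le> degree P" by (rule card_poly_roots_bound[OF Pnz])
  finally show False using degP i0 by linarith
qed

lemma div_xpow_coeff: "coeff (p div [:0, 1::rat:] ^ k) i = coeff p (i + k)"
proof -
  have X: "[:0, 1::rat:] ^ k = monom 1 k" by (simp add: monom_altdef)
  have dec: "p = poly_cutoff k p + poly_shift k p * monom 1 k"
    by (rule poly_eqI) (auto simp: coeff_poly_cutoff coeff_poly_shift coeff_monom_mult mult.commute[of _ "monom _ _"])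
  have cut: "poly_cutoff k p div monom 1 k = 0"
  proof (cases "poly_cutoff k p = 0")
    case False
    have "degree (poly_cutoff k p) < k"
    proof (rule ccontr)
      assume "\<not> degree (poly_cutoff k p) < k"
      then have "coeff (poly_cutoff k p) (degree (poly_cutoff k p)) = 0" by (simp add: coeff_poly_cutoff)
      then show False using False by simp
    qed
    then show ?thesis by (intro div_poly_less) (simp add: degree_monom_eq)
  qed simp
  have "p div monom 1 k = poly_shift k p"
    by (subst dec) (simp add: cut)
  then show ?thesis unfolding X by (simp add: coeff_poly_shift)
qed

lemma rem_step: assumes "remove_2hook N M" "finite N"
  shows "finite M \<and> card M = card N \<and> \<Sum>M + 2 = \<Sum>N"
proof -
  obtain a where a: "a \<in> N" "2 \<le> a" "a - 2 \<notin> N" "M = insert (a - 2) (N - {a})"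
    using assms(1) unfolding remove_2hook_def by blast
  have f: "finite (N - {a})" using assms(2) by simp
  have nin: "a - 2 \<notin> N - {a}" using a by simp
  have "card M = Suc (card (N - {a}))" using a(4) f nin by simp
  also have "\<dots> = card N" by (rule card_Suc_Diff1[OF assms(2) a(1)])
  finally have c: "card M = card N" .
  have "\<Sum>M = (a - 2) + \<Sum>(N - {a})" using a(4) f nin by simp
  moreover have "\<Sum>N = a + \<Sum>(N - {a})" using a(1) assms(2) by (simp add: sum.remove)
  ultimately show ?thesis using a(2) a(4) c assms(2) by auto
qed

lemma rem_rtr: assumes "remove_2hook\<^sup>*\<^sup>* N M" "finite N"
  shows "finite M \<and> card M = card N \<and> \<Sum>M \<le> \<Sum>N \<and> even (\<Sum>N - \<Sum>M) \<and> (\<Sum>M = \<Sum>N \<longrightarrow> M = N)"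
  using assms(1)
proof (induction rule: rtranclp_induct)
  case base then show ?case using assms(2) by simp
next
  case (step M M')
  then have st: "finite M' \<and> card M' = card M \<and> \<Sum>M' + 2 = \<Sum>M" using rem_step by blast
  have "even (\<Sum>N - \<Sum>M')"
  proof -
    have e1: "even (\<Sum>N - \<Sum>M)" using step.IH by blast
    have eq: "\<Sum>N - \<Sum>M' = (\<Sum>N - \<Sum>M) + 2" using st step.IH by linarith
    show ?thesis unfolding eq using e1 by simp
  qed
  then show ?case using st step.IH by auto
qed

lemma rem_exists: "finite N \<Longrightarrow> \<exists>M. remove_2hook\<^sup>*\<^sup>* N M \<and> (\<nexists>M'. remove_2hook M M')"
proof (induction "\<Sum>N" arbitrary: N rule: less_induct)
  case less
  show ?case
  proof (cases "\<exists>M'. remove_2hook N M'")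
    case True
    then obtain M' where M': "remove_2hook N M'" by blast
    then have "finite M'" "\<Sum>M' < \<Sum>N" using rem_step[OF M' less.prems] by auto
    then obtain M where "remove_2hook\<^sup>*\<^sup>* M' M" "\<nexists>M''. remove_2hook M M''" using less.hyps by blast
    then show ?thesis using M' by (meson converse_rtranclp_into_rtranclp)
  qed auto
qed

lemma sum_card_lb: "finite (M::nat set) \<Longrightarrow> \<Sum>{..<card M} \<le> \<Sum>M"
proof (induction "card M" arbitrary: M)
  case 0 then show ?case by simp
next
  case (Suc r)
  then have ne: "M \<noteq> {}" by auto
  define x where "x = Max M"
  have x: "x \<in> M" using Max_in[OF Suc.prems ne] x_def by simp
  have cM: "card (M - {x}) = r" using Suc.hyps(2) x Suc.prems by simp
  have "M \<subseteq> {..x}" using Max_ge[OF Suc.prems] x_def by auto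
  then have "card M \<le> Suc x" using card_mono[of "{..x}" M] by simp
  then have rx: "r \<le> x" using Suc.hyps(2) by simp
  have "\<Sum>{..<card M} = r + \<Sum>{..<r}" using Suc.hyps(2)[symmetric] by simp
  also have "\<dots> \<le> x + \<Sum>(M - {x})" using Suc.hyps(1)[of "M - {x}"] cM Suc.prems rx by simp
  also have "\<dots> = \<Sum>M" using x Suc.prems by (simp add: sum.remove)
  finally show ?case .
qed

lemma core_props: "remove_2hook\<^sup>*\<^sup>* (set (deg_seq lam)) (core_degs lam) \<and> (\<nexists>M'. remove_2hook (core_degs lam) M')"
  unfolding core_degs_def by (rule someI_ex) (rule rem_exists, simp)

lemma ds_len[simp]: "length (deg_seq lam) = length lam" by (simp add: deg_seq_def)
lemma ds_nth: "i < length lam \<Longrightarrow> deg_seq lam ! i = rev lam ! i + i" by (simp add: deg_seq_def)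

lemma ds_mono: assumes "is_partition lam" "i < j" "j < length lam"
  shows "deg_seq lam ! i < deg_seq lam ! j"
proof -
  have "rev lam ! i \<le> rev lam ! j"
    using assms unfolding is_partition_def by (intro sorted_nth_mono) auto
  then show ?thesis using assms by (simp add: ds_nth)
qed

lemma ds_distinct: assumes "is_partition lam" shows "distinct (deg_seq lam)"
proof -
  have "deg_seq lam ! i \<noteq> deg_seq lam ! j" if "i < length lam" "j < length lam" "i \<noteq> j" for i j
    using ds_mono[OF assms, of i j] ds_mono[OF assms, of j i] that by (cases "i < j") auto
  then show ?thesis by (auto simp: distinct_conv_nth)
qed

lemma ds_sum: assumes "is_partition lam" shows "\<Sum>(set (deg_seq lam)) = (\<Sum>i<length lam. deg_seq lam ! i)"
  using ds_distinct[OF assms] by (simp add: sum.distinct_set_conv_list sum_list_sum_nth lessThan_atLeast0)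

lemma gauss2: "2 * (\<Sum>i<r. i) = r * (r - 1::nat)"
  by (induction r) (auto simp: algebra_simps)

lemma R_facts:
  assumes P: "is_partition lam"
    and r_def: "r = length lam" and nf_def: "nf = (\<lambda>j. deg_seq lam ! j)"
    and N0_def: "N0 = (\<Sum>i<r. nf i) - (\<Sum>i<r. i)"
  shows "\<exists>c. c \<noteq> 0 \<and> Dn r nf \<noteq> 0 \<and> core_size lam \<le> N0 \<and> even (N0 - core_size lam) \<and>
   (\<forall>j > N0 - core_size lam. coeff (R_part lam) j = 0) \<and>
   coeff (R_part lam) (N0 - core_size lam) = c * Dn r nf \<and>
   (2 \<le> N0 - core_size lam \<longrightarrow> coeff (R_part lam) (N0 - core_size lam - 2) = c * Bn r nf) \<and>
   (N0 = core_size lam \<longrightarrow> (\<forall>x\<in>set (deg_seq lam). 2 \<le> x \<longrightarrow> x - 2 \<in> set (deg_seq lam)))"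
proof -
  define V where "V = (\<Prod>j<r. \<Prod>i<j. (of_nat (nf j) - of_nat (nf i) :: rat))"
  have mono: "nf i < nf j" if "i < j" "j < r" for i j
    using ds_mono[OF P that(1)] that unfolding nf_def r_def by simp
  have V: "V \<noteq> 0" unfolding V_def by (auto simp: prod_zero_iff) (metis less_irrefl mono)
  have inj: "inj_on nf {..<r}"
    by (rule inj_onI) (metis lessThan_iff mono nat_neq_iff)
  have Dnz: "Dn r nf \<noteq> 0" by (rule Dn_nonzero[OF inj])
  have He: "hermite_part lam = Polynomial.smult (1 / V) (wronskian r (\<lambda>j. hermite (nf j)))"
    unfolding hermite_part_def Let_def V_def r_def nf_def by simp
  have T: "top (hermite_part lam) N0 (1 / V * Dn r nf) (1 / V * Bn r nf)"
    unfolding He N0_def by (rule top_smult[OF top_W])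
  define N where "N = set (deg_seq lam)"
  define M where "M = core_degs lam"
  have fN: "finite N" unfolding N_def by simp
  have cN: "card N = r" unfolding N_def r_def using ds_distinct[OF P] by (simp add: distinct_card)
  have sN: "\<Sum>N = (\<Sum>i<r. nf i)" unfolding N_def r_def nf_def by (rule ds_sum[OF P])
  have cp: "remove_2hook\<^sup>*\<^sup>* N M" "\<nexists>M'. remove_2hook M M'" using core_props[of lam] unfolding N_def M_def by auto
  have rt: "finite M \<and> card M = card N \<and> \<Sum>M \<le> \<Sum>N \<and> even (\<Sum>N - \<Sum>M) \<and> (\<Sum>M = \<Sum>N \<longrightarrow> M = N)"
    by (rule rem_rtr[OF cp(1) fN])
  have lb: "(\<Sum>i<r. i) \<le> \<Sum>M" using sum_card_lb[of M] rt cN by simp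
  have ks: "core_size lam = \<Sum>M - (\<Sum>i<r. i)"
    unfolding core_size_def M_def[symmetric] r_def[symmetric] using gauss2[of r] by simp
  have k_le: "core_size lam \<le> N0" unfolding ks N0_def sN[symmetric] using rt by (simp add: diff_le_mono)
  have d: "N0 - core_size lam = \<Sum>N - \<Sum>M" unfolding ks N0_def sN[symmetric] using rt lb by simp
  have termN: "\<forall>x\<in>set (deg_seq lam). 2 \<le> x \<longrightarrow> x - 2 \<in> set (deg_seq lam)" if "N0 = core_size lam"
  proof -
    have "M = N" using rt d that by simp
    then have "\<nexists>M'. remove_2hook N M'" using cp by simp
    then show ?thesis unfolding N_def remove_2hook_def by blast
  qed
  have cR: "coeff (R_part lam) j = coeff (hermite_part lam) (j + core_size lam)" for j
    unfolding R_part_def by (rule div_xpow_coeff)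
  note TC = top_coeffs[OF T]
  show ?thesis
  proof (intro exI[of _ "1 / V"] conjI impI allI)
    show "1 / V \<noteq> 0" using V by simp
    show "Dn r nf \<noteq> 0" by (rule Dnz)
    show "core_size lam \<le> N0" by (rule k_le)
    show "even (N0 - core_size lam)" unfolding d using rt by blast
    show "coeff (R_part lam) j = 0" if "N0 - core_size lam < j" for j
      using TC(1) that k_le by (simp add: cR)
    show "coeff (R_part lam) (N0 - core_size lam) = 1 / V * Dn r nf"
      using TC(2) k_le by (simp add: cR)
    show "coeff (R_part lam) (N0 - core_size lam - 2) = 1 / V * Bn r nf" if "2 \<le> N0 - core_size lam"
    proof -
      have "N0 - core_size lam - 2 + core_size lam = N0 - 2" using that k_le by simp
      then show ?thesis using TC(3) that by (simp add: cR)
    qed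
    show "\<forall>x\<in>set (deg_seq lam). 2 \<le> x \<longrightarrow> x - 2 \<in> set (deg_seq lam)" if "N0 = core_size lam"
      using termN[OF that] .
  qed
qed

lemma ds_ge: "i < length lam \<Longrightarrow> i \<le> deg_seq lam ! i" by (simp add: ds_nth)

lemma ds_eq_imp: assumes "length mu1 = length mu2" "\<And>i. i < length mu1 \<Longrightarrow> deg_seq mu1 ! i = deg_seq mu2 ! i"
  shows "mu1 = mu2"
proof -
  have "rev mu1 = rev mu2"
    by (rule nth_equalityI) (use assms in \<open>auto simp: ds_nth\<close>)
  then show ?thesis by simp
qed

lemma lists_from_ab:
  assumes P1: "is_partition mu1" and L1: "length mu1 = r" and L2: "length mu2 = r" and r: "1 \<le> r"
    and common: "\<And>j. j < r - 1 \<Longrightarrow> deg_seq mu1 ! j = deg_seq mu2 ! j"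
    and a: "deg_seq mu1 ! (r - 1) = r - 1" and b: "deg_seq mu2 ! (r - 1) = r"
  shows "mu1 = replicate r 0 \<and> mu2 = 1 # replicate (r - 1) 0"
proof -
  have ra: "rev mu1 ! (r - 1) = 0" using a ds_nth[of "r-1" mu1] L1 r by simp
  have z1: "rev mu1 ! i = 0" if "i < r" for i
  proof -
    have "rev mu1 ! i \<le> rev mu1 ! (r - 1)"
      using P1 that L1 unfolding is_partition_def by (intro sorted_nth_mono) auto
    then show ?thesis using ra by simp
  qed
  have m1: "mu1 = replicate r 0"
  proof (rule nth_equalityI)
    fix i assume "i < length mu1"
    then have "mu1 ! i = rev mu1 ! (r - 1 - i)" using L1 by (simp add: rev_nth)
    then show "mu1 ! i = replicate r 0 ! i" using z1[of "r - 1 - i"] \<open>i < length mu1\<close> L1 r by simp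
  qed (simp add: L1)
  have z2: "rev mu2 ! i = 0" if "i < r - 1" for i
  proof -
    have "deg_seq mu1 ! i = rev mu1 ! i + i" "deg_seq mu2 ! i = rev mu2 ! i + i" using that L1 L2 by (auto simp: ds_nth)
    then show ?thesis using common[OF that] z1[of i] that by simp
  qed
  have o2: "rev mu2 ! (r - 1) = 1" using b ds_nth[of "r-1" mu2] L2 r by simp
  have m2: "mu2 = 1 # replicate (r - 1) 0"
  proof (rule nth_equalityI)
    fix i assume i: "i < length mu2"
    then have e: "mu2 ! i = rev mu2 ! (r - 1 - i)" using L2 by (simp add: rev_nth)
    show "mu2 ! i = (1 # replicate (r - 1) 0) ! i"
    proof (cases i)
      case 0 then show ?thesis using e o2 by simp
    next
      case (Suc i')
      then have "r - 1 - i < r - 1" using i L2 by simp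
      then show ?thesis using e z2 Suc i L2 by simp
    qed
  qed (use L2 r in simp)
  show ?thesis using m1 m2 by simp
qed

lemma sum_split_last: "1 \<le> (r::nat) \<Longrightarrow> (\<Sum>j<r. f j) = (\<Sum>j<r - 1. f j) + f (r - 1)"
  by (cases r) auto

lemma comb:
  assumes fS: "finite S" and cS: "card S = r - 1" and Sa: "\<forall>s\<in>S. s < a" and ab: "a < (b::nat)"
    and C1: "\<forall>x\<in>insert a S. 2 \<le> x \<longrightarrow> x - 2 \<in> insert a S"
    and C2: "\<forall>x\<in>insert b S. 2 \<le> x \<longrightarrow> x - 2 \<in> insert b S" and r: "1 \<le> r"
  shows "a = r - 1 \<and> b = r"
proof -
  have bS: "b - 2 \<in> S" if "2 \<le> b" using C2 that by auto
  have b: "b = a + 1"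
  proof (cases "2 \<le> b")
    case True then show ?thesis using bS Sa ab by fastforce
  qed (use ab in auto)
  have all: "x \<in> S" if "x < a" for x
    using that
  proof (induction "a - x" arbitrary: x rule: less_induct)
    case less
    show ?case
    proof (cases "x + 1 = a")
      case True then show ?thesis using bS b by fastforce
    next
      case False
      show ?thesis
      proof (cases "x + 2 = a")
        case True
        then have "a - 2 \<in> insert a S" using C1 by auto
        then show ?thesis using True by auto
      next
        case False
        then have "x + 2 < a" using \<open>x + 1 \<noteq> a\<close> less.prems by linarith
        then have "x + 2 \<in> S" using less.hyps[of "x+2"] by auto
        then have "x + 2 - 2 \<in> insert a S" using C1 by auto
        then show ?thesis using less.prems by auto
      qed
    qed
  qed
  have "S = {..<a}" using all Sa by auto
  then have "a = r - 1" using cS by simp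
  then show ?thesis using b r by simp
qed

lemma main_aux:
  assumes P1: "is_partition mu1" and P2: "is_partition mu2"
    and L1: "length mu1 = r" and L2: "length mu2 = r" and r: "1 \<le> r"
    and common: "\<And>j. j < r - 1 \<Longrightarrow> deg_seq mu1 ! j = deg_seq mu2 ! j"
    and ab: "deg_seq mu1 ! (r - 1) < deg_seq mu2 ! (r - 1)"
    and R: "R_part mu1 = R_part mu2"
  shows "mu1 = replicate r 0 \<and> mu2 = 1 # replicate (r - 1) 0"
proof -
  define a where "a = deg_seq mu1 ! (r - 1)"
  define b where "b = deg_seq mu2 ! (r - 1)"
  define nf1 where "nf1 = (\<lambda>j. deg_seq mu1 ! j)"
  define nf2 where "nf2 = (\<lambda>j. deg_seq mu2 ! j)"
  define N1 where "N1 = (\<Sum>i<r. nf1 i) - (\<Sum>i<r. i)"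
  define N2 where "N2 = (\<Sum>i<r. nf2 i) - (\<Sum>i<r. i)"
  have a_ge: "r - 1 \<le> a" unfolding a_def using ds_ge[of "r-1" mu1] L1 r by simp
  have ab': "a < b" using ab unfolding a_def b_def .
  obtain c1 where F1: "c1 \<noteq> 0 \<and> Dn r nf1 \<noteq> 0 \<and> core_size mu1 \<le> N1 \<and> even (N1 - core_size mu1) \<and>
   (\<forall>j > N1 - core_size mu1. coeff (R_part mu1) j = 0) \<and>
   coeff (R_part mu1) (N1 - core_size mu1) = c1 * Dn r nf1 \<and>
   (2 \<le> N1 - core_size mu1 \<longrightarrow> coeff (R_part mu1) (N1 - core_size mu1 - 2) = c1 * Bn r nf1) \<and>
   (N1 = core_size mu1 \<longrightarrow> (\<forall>x\<in>set (deg_seq mu1). 2 \<le> x \<longrightarrow> x - 2 \<in> set (deg_seq mu1)))"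
    using R_facts[OF P1 L1[symmetric] nf1_def N1_def] by blast
  obtain c2 where F2: "c2 \<noteq> 0 \<and> Dn r nf2 \<noteq> 0 \<and> core_size mu2 \<le> N2 \<and> even (N2 - core_size mu2) \<and>
   (\<forall>j > N2 - core_size mu2. coeff (R_part mu2) j = 0) \<and>
   coeff (R_part mu2) (N2 - core_size mu2) = c2 * Dn r nf2 \<and>
   (2 \<le> N2 - core_size mu2 \<longrightarrow> coeff (R_part mu2) (N2 - core_size mu2 - 2) = c2 * Bn r nf2) \<and>
   (N2 = core_size mu2 \<longrightarrow> (\<forall>x\<in>set (deg_seq mu2). 2 \<le> x \<longrightarrow> x - 2 \<in> set (deg_seq mu2)))"
    using R_facts[OF P2 L2[symmetric] nf2_def N2_def] by blast
  define d1 where "d1 = N1 - core_size mu1"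
  define d2 where "d2 = N2 - core_size mu2"
  have c1: "c1 \<noteq> 0" and D1: "Dn r nf1 \<noteq> 0" and ev1: "even d1" and hi1: "\<forall>j > d1. coeff (R_part mu1) j = 0"
    and top1: "coeff (R_part mu1) d1 = c1 * Dn r nf1"
    and sec1: "2 \<le> d1 \<longrightarrow> coeff (R_part mu1) (d1 - 2) = c1 * Bn r nf1"
    and cl1: "N1 = core_size mu1 \<longrightarrow> (\<forall>x\<in>set (deg_seq mu1). 2 \<le> x \<longrightarrow> x - 2 \<in> set (deg_seq mu1))"
    and k1: "core_size mu1 \<le> N1"
    using F1 unfolding d1_def by blast+
  have c2: "c2 \<noteq> 0" and D2: "Dn r nf2 \<noteq> 0" and hi2: "\<forall>j > d2. coeff (R_part mu2) j = 0"
    and top2: "coeff (R_part mu2) d2 = c2 * Dn r nf2"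
    and sec2: "2 \<le> d2 \<longrightarrow> coeff (R_part mu2) (d2 - 2) = c2 * Bn r nf2"
    and cl2: "N2 = core_size mu2 \<longrightarrow> (\<forall>x\<in>set (deg_seq mu2). 2 \<le> x \<longrightarrow> x - 2 \<in> set (deg_seq mu2))"
    and k2: "core_size mu2 \<le> N2"
    using F2 unfolding d2_def by blast+
  have d12: "d1 = d2"
  proof -
    have "\<not> d2 < d1"
    proof
      assume "d2 < d1"
      then have "coeff (R_part mu2) d1 = 0" using hi2 by blast
      then show False using top1 R c1 D1 by simp
    qed
    moreover have "\<not> d1 < d2"
    proof
      assume "d1 < d2"
      then have "coeff (R_part mu1) d2 = 0" using hi1 by blast
      then show False using top2 R c2 D2 by simp
    qed
    ultimately show ?thesis by simp
  qed
  have fin: "a = r - 1 \<and> b = r"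
  proof (cases "2 \<le> d1")
    case True
    have eqD: "c1 * Dn r nf1 = c2 * Dn r nf2" using top1 top2 R d12 by simp
    have eqB: "c1 * Bn r nf1 = c2 * Bn r nf2" using sec1 sec2 R d12 True by simp
    define K where "K = (\<lambda>nf. (\<Sum>j<r. of_nat (nf j) * (of_nat (nf j) - 1)) - (\<Sum>i<r. of_nat i * (of_nat i - 1))
     - 2 * of_nat (r - 1) * ((\<Sum>j<r. of_nat (nf j)) - (\<Sum>i<r. of_nat (i::nat))) :: rat)"
    have "c1 * (- (1/2) * K nf1 * Dn r nf1) = c2 * (- (1/2) * K nf2 * Dn r nf2)"
      using eqB unfolding Bn_formula K_def .
    then have h: "c1 * (K nf1 * Dn r nf1) = c2 * (K nf2 * Dn r nf2)" by simp
    have "K nf1 * (c1 * Dn r nf1) = K nf2 * (c2 * Dn r nf2)" using h by (metis mult.left_commute)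
    then have "K nf1 * (c1 * Dn r nf1) = K nf2 * (c1 * Dn r nf1)" using eqD by simp
    then have KK: "K nf1 = K nf2" using F1 by simp
    have cs: "(\<Sum>j<r - 1. f (nf1 j)) = (\<Sum>j<r - 1. f (nf2 j))" for f :: "nat \<Rightarrow> rat"
      by (rule sum.cong) (auto simp: nf1_def nf2_def common)
    have "K nf2 - K nf1 = (of_nat b * (of_nat b - 1) - of_nat a * (of_nat a - 1)) - 2 * of_nat (r - 1) * (of_nat b - of_nat a)"
      unfolding K_def sum_split_last[OF r, of "\<lambda>j. of_nat (nf1 j) * (of_nat (nf1 j) - 1)"]
        sum_split_last[OF r, of "\<lambda>j. of_nat (nf2 j) * (of_nat (nf2 j) - 1)"]
        sum_split_last[OF r, of "\<lambda>j. of_nat (nf1 j)"] sum_split_last[OF r, of "\<lambda>j. of_nat (nf2 j)"]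
        cs[of "\<lambda>x. of_nat x * (of_nat x - 1)"] cs[of "\<lambda>x. of_nat x"]
      by (simp add: a_def b_def nf1_def nf2_def algebra_simps)
    then have "(of_nat b - of_nat a) * (of_nat a + of_nat b - 1 - 2 * of_nat (r - 1)) = (0::rat)"
      using KK by (simp add: algebra_simps)
    then have eq: "of_nat a + of_nat b - 1 - 2 * of_nat (r - 1) = (0::rat)" using ab' by simp
    have "(of_nat (a + b) :: rat) = of_nat (2 * (r - 1) + 1)"
      using eq by (simp only: of_nat_add of_nat_mult of_nat_1 of_nat_numeral)
    then have "a + b = 2 * (r - 1) + 1" by (simp only: of_nat_eq_iff)
    then show ?thesis using a_ge ab' r by linarith
  next
    case False
    have "d1 \<noteq> 1" using ev1 by auto
    then have "d1 = 0" using False by simp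
    then have "d2 = 0" using d12 by simp
    have Nz1: "N1 = core_size mu1" using \<open>d1 = 0\<close> k1 unfolding d1_def by simp
    have Nz2: "N2 = core_size mu2" using \<open>d2 = 0\<close> k2 unfolding d2_def by simp
    have C1: "\<forall>x\<in>set (deg_seq mu1). 2 \<le> x \<longrightarrow> x - 2 \<in> set (deg_seq mu1)" using cl1 Nz1 by blast
    have C2: "\<forall>x\<in>set (deg_seq mu2). 2 \<le> x \<longrightarrow> x - 2 \<in> set (deg_seq mu2)" using cl2 Nz2 by blast
    define S where "S = set (take (r - 1) (deg_seq mu1))"
    have tk: "take (r - 1) (deg_seq mu1) = take (r - 1) (deg_seq mu2)"
      by (rule nth_equalityI) (use L1 L2 common in auto)
    have dec: "xs = take (r - 1) xs @ [xs ! (r - 1)]" if "length xs = r" for xs :: "nat list"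
      using take_Suc_conv_app_nth[of "r-1" xs] r that by simp
    have e1: "deg_seq mu1 = take (r - 1) (deg_seq mu1) @ [a]" unfolding a_def by (rule dec) (simp add: L1)
    have e2: "deg_seq mu2 = take (r - 1) (deg_seq mu2) @ [b]" unfolding b_def by (rule dec) (simp add: L2)
    have s1: "set (deg_seq mu1) = insert a S" unfolding S_def by (subst e1) auto
    have s2: "set (deg_seq mu2) = insert b S" unfolding S_def tk by (subst e2) auto
    have Sa: "\<forall>s\<in>S. s < a"
    proof
      fix s assume "s \<in> S"
      then obtain j where j: "j < r - 1" "s = deg_seq mu1 ! j" unfolding S_def using L1
        by (auto simp: in_set_conv_nth)
      then show "s < a" unfolding a_def using ds_mono[OF P1, of j "r-1"] L1 r by simp
    qed
    have cS: "card S = r - 1" unfolding S_def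
      using distinct_card[OF distinct_take[OF ds_distinct[OF P1]], of "r-1"] L1 by simp
    show ?thesis by (rule comb[OF _ cS Sa ab' _ _ r]) (use s1 s2 C1 C2 S_def in auto)
  qed
  show ?thesis
    by (rule lists_from_ab[OF P1 L1 L2 r common]) (use fin a_def b_def in auto)
qed


theorem mainTheorem20:
  fixes mu1 mu2 :: "nat list" and r :: nat
  assumes "is_partition mu1" and "is_partition mu2"
    and "length mu1 = r" and "length mu2 = r"
    and "take (r - 1) (deg_seq mu1) = take (r - 1) (deg_seq mu2)"
    and "R_part mu1 = R_part mu2"
  shows "mu1 = mu2
    \<or> (mu1 = replicate r 0 \<and> mu2 = 1 # replicate (r - 1) 0)
    \<or> (mu2 = replicate r 0 \<and> mu1 = 1 # replicate (r - 1) 0)"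
proof (cases "r = 0")
  case True
  then show ?thesis using assms(3,4) by simp
next
  case False
  then have r: "1 \<le> r" by simp
  have common: "deg_seq mu1 ! j = deg_seq mu2 ! j" if "j < r - 1" for j
    using arg_cong[OF assms(5), of "\<lambda>xs. xs ! j"] that by simp
  consider "deg_seq mu1 ! (r - 1) = deg_seq mu2 ! (r - 1)"
    | "deg_seq mu1 ! (r - 1) < deg_seq mu2 ! (r - 1)"
    | "deg_seq mu2 ! (r - 1) < deg_seq mu1 ! (r - 1)" by linarith
  then show ?thesis
  proof cases
    case 1
    have "mu1 = mu2"
    proof (rule ds_eq_imp)
      show "length mu1 = length mu2" using assms(3,4) by simp
      fix i assume "i < length mu1"
      then have "i < r - 1 \<or> i = r - 1" using assms(3) by linarith
      then show "deg_seq mu1 ! i = deg_seq mu2 ! i" using common 1 by auto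
    qed
    then show ?thesis by simp
  next
    case 2
    have "mu1 = replicate r 0 \<and> mu2 = 1 # replicate (r - 1) 0"
      by (rule main_aux[OF assms(1,2,3,4) r common 2 assms(6)])
    then show ?thesis by simp
  next
    case 3
    have "mu2 = replicate r 0 \<and> mu1 = 1 # replicate (r - 1) 0"
      by (rule main_aux[OF assms(2,1,4,3) r _ 3 assms(6)[symmetric]]) (use common in simp)
    then show ?thesis by simp
  qed
qed

end
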